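(* The sequence $(\mathrm{m}(d)^d)_{d\ge 1}$ has an accumulation point in the interval $[1,2]$.
   Context: For an algebraic integer $\alpha$ with conjugates $\alpha_1,\dots,\alpha_d$, $\operatorname{house}(\alpha)=\max_i|\alpha_i|$. $\mathrm{m}(d)$ denotes the minimum of $\operatorname{house}(\alpha)$ over all algebraic integers $\alpha$ of degree $d$ that are not roots of unity. *)

theory Defs
  imports "HOL-Computational_Algebra.Computational_Algebra" Complex_Main
begin

definition min_poly :: "complex \<Rightarrow> rat poly" where
  "min_poly \<alpha> = (THE p. lead_coeff p = 1 \<and> irreducible p \<and> poly (map_poly of_rat p) \<alpha> = 0)"

definition algebraic_integer :: "complex \<Rightarrow> bool" where
  "algebraic_integer \<alpha> \<longleftrightarrow> (\<exists>p :: int poly. lead_coeff p = 1 \<and> poly (map_poly of_int p) \<alpha> = 0)"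

definition alg_degree :: "complex \<Rightarrow> nat" where
  "alg_degree \<alpha> = degree (min_poly \<alpha>)"

definition conjugates :: "complex \<Rightarrow> complex set" where
  "conjugates \<alpha> = {z. poly (map_poly of_rat (min_poly \<alpha>)) z = 0}"

definition house :: "complex \<Rightarrow> real" where
  "house \<alpha> = Max (norm ` conjugates \<alpha>)"

definition root_of_unity :: "complex \<Rightarrow> bool" where
  "root_of_unity \<alpha> \<longleftrightarrow> (\<exists>n::nat. n > 0 \<and> \<alpha> ^ n = 1)"

definition mhouse :: "nat \<Rightarrow> real" where
  "mhouse d = Inf {house \<alpha> | \<alpha>. algebraic_integer \<alpha> \<and> alg_degree \<alpha> = d \<and> \<not> root_of_unity \<alpha>}"

end

theory Submission imports Defs "Berlekamp_Zassenhaus.Factor_Bound" begin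

lemma mp_rat_mult: "map_poly (of_rat::rat\<Rightarrow>complex) (p*q) = map_poly of_rat p * map_poly of_rat q"
  by (induct p) (auto simp: hom_distribs)

lemma unit_const: "is_unit (r::rat poly) \<Longrightarrow> \<exists>c. r = [:c:] \<and> c \<noteq> 0"
  by (metis is_unit_iff_degree is_unit_poly_iff not_is_unit_0 pCons_eq_0_iff)

lemma irr_dvd:
  assumes irr: "irreducible (p::rat poly)" and pa: "poly (map_poly of_rat p) (\<alpha>::complex) = 0"
    and ra: "poly (map_poly of_rat r) \<alpha> = 0"
  shows "p dvd r"
proof -
  obtain x y where b: "bezout_coefficients p r = (x,y)" by (cases "bezout_coefficients p r") auto
  have "x*p + y*r = gcd p r" by (rule bezout_coefficients[OF b])
  hence g0: "poly (map_poly of_rat (gcd p r)) \<alpha> = 0" using pa ra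
    by (metis (no_types) add.right_neutral mp_rat_mult mult_zero_right of_rat_hom.map_poly_hom_add poly_add poly_mult)
  have "gcd p r dvd p" by simp
  then obtain k where pk: "p = gcd p r * k" ..
  from irreducibleD[OF irr pk] have "is_unit (gcd p r) \<or> is_unit k" .
  thus ?thesis
  proof
    assume "is_unit (gcd p r)"
    then obtain c where "gcd p r = [:c:]" "c \<noteq> 0" using unit_const by blast
    with g0 show ?thesis by simp
  next
    assume u: "is_unit k"
    have "p dvd gcd p r" using pk u by (metis dvd_refl mult_unit_dvd_iff)
    thus ?thesis by (meson dvd_trans gcd_dvd2)
  qed
qed

lemma ex_min:
  assumes "r \<noteq> 0" "poly (map_poly of_rat r) (\<alpha>::complex) = 0"
  shows "\<exists>p. lead_coeff p = 1 \<and> irreducible p \<and> poly (map_poly of_rat p) \<alpha> = 0"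
  using assms
proof (induction "degree r" arbitrary: r rule: less_induct)
  case less
  show ?case
  proof (cases "irreducible r")
    case True
    let ?p = "Polynomial.smult (inverse (lead_coeff r)) r"
    have "lead_coeff ?p = 1" using less.prems by simp
    moreover have "irreducible ?p" using True less.prems by simp
    moreover have "poly (map_poly of_rat ?p) \<alpha> = 0" using less.prems
      by (simp add: hom_distribs)
    ultimately show ?thesis by blast
  next
    case False
    have nu: "\<not> is_unit r"
    proof
      assume "is_unit r"
      then obtain c where "r = [:c:]" "c \<noteq> 0" using unit_const by blast
      with less.prems show False by simp
    qed
    from False less.prems(1) nu obtain a b where rab: "r = a*b" "\<not> is_unit a" "\<not> is_unit b"
      unfolding irreducible_def by blast
    have a0: "a \<noteq> 0" "b \<noteq> 0" using rab less.prems(1) by auto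
    have da: "degree a > 0" "degree b > 0" using rab(2,3) a0 by (auto simp: is_unit_iff_degree)
    have dr: "degree r = degree a + degree b" using rab a0 by (simp add: degree_mult_eq)
    have "poly (map_poly of_rat a) \<alpha> = 0 \<or> poly (map_poly of_rat b) \<alpha> = 0"
      using less.prems(2) rab(1) by (simp add: mp_rat_mult)
    thus ?thesis
    proof
      assume "poly (map_poly of_rat a) \<alpha> = 0"
      thus ?thesis using less.hyps[of a] a0 da dr by auto
    next
      assume "poly (map_poly of_rat b) \<alpha> = 0"
      thus ?thesis using less.hyps[of b] a0 da dr by auto
    qed
  qed
qed

lemma min_poly_eq:
  assumes "lead_coeff p = 1" "irreducible p" "poly (map_poly of_rat p) \<alpha> = 0"
  shows "min_poly \<alpha> = p"
  unfolding min_poly_def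
  by (rule the_equality) (use assms in \<open>auto intro: poly_dvd_antisym irr_dvd\<close>)

lemma min_poly_props:
  assumes "r \<noteq> 0" "poly (map_poly of_rat r) (\<alpha>::complex) = 0"
  shows "lead_coeff (min_poly \<alpha>) = 1 \<and> irreducible (min_poly \<alpha>) \<and> poly (map_poly of_rat (min_poly \<alpha>)) \<alpha> = 0"
  using ex_min[OF assms] min_poly_eq by metis

lemma gauss_monic:
  fixes p :: "int poly" and g h :: "rat poly"
  assumes lp: "lead_coeff p = 1" and pgh: "map_poly rat_of_int p = g * h" and lg: "lead_coeff g = 1"
  shows "\<exists>g'. g = map_poly rat_of_int g'"
proof -
  have p0: "p \<noteq> 0" using lp by auto
  have "content p dvd 1" using lp by (metis content_dvd_coeff)
  hence cp: "content p = 1" by (metis content_ge_0_int dvd_antisym one_dvd zdvd1_eq abs_of_nonneg)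
  obtain r rg where g: "rat_to_normalized_int_poly g = (r,rg)" by force
  obtain s sh where h: "rat_to_normalized_int_poly h = (s,sh)" by force
  have prs: "p = rg * sh" by (rule rat_to_int_factor_content_1[OF cp pgh g h p0])
  have "lead_coeff rg * lead_coeff sh = 1" using lp prs by (simp add: lead_coeff_mult)
  hence lr: "lead_coeff rg = 1 \<or> lead_coeff rg = -1" using zmult_eq_1_iff by blast
  have gr: "g = Polynomial.smult r (map_poly of_int rg)" by (rule rat_to_normalized_int_poly(1)[OF g])
  have "1 = r * of_int (lead_coeff rg)" using lg gr rat_to_normalized_int_poly(2)[OF g] by simp
  hence "r = of_int (lead_coeff rg)" using lr by auto
  hence "g = map_poly rat_of_int (Polynomial.smult (lead_coeff rg) rg)" using gr by (simp add: hom_distribs)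
  thus ?thesis by blast
qed

lemma poly_prod_lin: "poly (\<Prod>a\<leftarrow>as. [:- a, 1:]) x = (\<Prod>a\<leftarrow>as. x - (a::complex))"
  by (induction as) (auto simp: algebra_simps)

lemma prod_roots:
  fixes f :: "complex poly" assumes "lead_coeff f = 1"
  shows "\<exists>as. length as = degree f \<and> (\<forall>a\<in>set as. poly f a = 0) \<and> poly f 0 = (\<Prod>a\<leftarrow>as. - a)"
proof -
  obtain as where f: "Polynomial.smult (lead_coeff f) (\<Prod>a\<leftarrow>as. [:- a, 1:]) = f" "length as = degree f"
    using fundamental_theorem_algebra_factorized by blast
  hence f': "f = (\<Prod>a\<leftarrow>as. [:- a, 1:])" using assms by simp
  have "\<forall>a\<in>set as. poly f a = 0" by (subst f', subst poly_prod_lin) (auto simp: prod_list_zero_iff)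
  moreover have "poly f 0 = (\<Prod>a\<leftarrow>as. - a)" by (subst f', subst poly_prod_lin) (induct as; simp)
  ultimately show ?thesis using f(2) by blast
qed

lemma prod_cmod_nonneg: "0 \<le> prod_list (map cmod as)" by (induct as) auto

lemma norm_prod_le: "(\<forall>a\<in>set as. norm a \<le> M) \<Longrightarrow> norm (\<Prod>a\<leftarrow>as. - (a::complex)) \<le> M ^ length as"
proof (induction as)
  case (Cons a as)
  hence "norm a \<le> M" "norm (\<Prod>a\<leftarrow>as. - a) \<le> M ^ length as" by auto
  moreover have "0 \<le> M" using \<open>norm a \<le> M\<close> norm_ge_zero order_trans by blast
  ultimately show ?case by (simp add: norm_mult, intro mult_mono) (auto intro: prod_cmod_nonneg)
qed auto

lemma norm_prod_pow: "(\<forall>a\<in>set as. norm a ^ d = c) \<Longrightarrow> norm (\<Prod>a\<leftarrow>as. - (a::complex)) ^ d = c ^ length as"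
  by (induction as) (auto simp: norm_mult power_mult_distrib)

lemma pow_lt1: "0 \<le> (x::real) \<Longrightarrow> x < 1 \<Longrightarrow> n \<ge> 1 \<Longrightarrow> x ^ n < 1"
  by (simp add: power_less_one_iff)

lemma house_ge1:
  assumes ai: "algebraic_integer \<alpha>" and d: "alg_degree \<alpha> \<ge> 2"
  shows "house \<alpha> \<ge> 1"
proof -
  obtain q :: "int poly" where q: "lead_coeff q = 1" "poly (map_poly of_int q) \<alpha> = 0"
    using ai unfolding algebraic_integer_def by blast
  let ?r = "map_poly rat_of_int q"
  have r0: "?r \<noteq> 0" using q(1) by auto
  have ra: "poly (map_poly of_rat ?r) \<alpha> = 0" using q(2) by (simp add: map_poly_map_poly o_def)
  define p where "p = min_poly \<alpha>"
  have pp: "lead_coeff p = 1" "irreducible p" "poly (map_poly of_rat p) \<alpha> = 0"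
    using min_poly_props[OF r0 ra] p_def by auto
  have "p dvd ?r" by (rule irr_dvd[OF pp(2,3) ra])
  then obtain h where "?r = p * h" ..
  from gauss_monic[OF q(1) this pp(1)] obtain p' where pp': "p = map_poly rat_of_int p'" by blast
  have dp: "degree p \<ge> 2" using d p_def alg_degree_def by simp
  have c0: "poly.coeff p 0 \<noteq> 0"
  proof
    assume "poly.coeff p 0 = 0"
    hence "[:0,1:] dvd p" by (metis dvd_iff_poly_eq_0 minus_zero poly_0_coeff_0)
    then obtain k where pk: "p = [:0,1:] * k" ..
    have nu: "\<not> is_unit [:0,1::rat:]" by (simp add: is_unit_iff_degree)
    from irreducibleD[OF pp(2) pk] nu have "is_unit k" by blast
    hence "degree k = 0" by (simp add: is_unit_iff_degree)
    have "degree p \<le> degree [:0,1::rat:] + degree k" unfolding pk by (rule degree_mult_le)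
    hence "degree p \<le> 1" using \<open>degree k = 0\<close> by simp
    thus False using dp by simp
  qed
  let ?f = "map_poly (of_rat::rat\<Rightarrow>complex) p"
  have lf: "lead_coeff ?f = 1" "degree ?f = degree p" using pp(1) by simp_all
  obtain as where as: "length as = degree ?f" "\<forall>a\<in>set as. poly ?f a = 0" "poly ?f 0 = (\<Prod>a\<leftarrow>as. - a)"
    using prod_roots[OF lf(1)] by blast
  have f0: "?f \<noteq> 0" using lf by auto
  have conj: "conjugates \<alpha> = {z. poly ?f z = 0}" unfolding conjugates_def p_def ..
  have fin: "finite (norm ` conjugates \<alpha>)" unfolding conj using poly_roots_finite[OF f0] by simp
  have le: "norm z \<le> house \<alpha>" if "poly ?f z = 0" for z
    unfolding house_def using fin that conj by (simp add: Max_ge)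
  have h0: "0 \<le> house \<alpha>" using le[of \<alpha>] pp(3) by (meson norm_ge_zero order_trans)
  have "norm (poly ?f 0) \<le> house \<alpha> ^ degree p"
    using norm_prod_le[of as "house \<alpha>"] as le lf(2) by auto
  moreover have "poly ?f 0 = of_int (poly.coeff p' 0)"
    by (simp add: poly_0_coeff_0 pp')
  moreover have "poly.coeff p' 0 \<noteq> 0" using c0 pp' by simp
  hence "1 \<le> norm (complex_of_int (poly.coeff p' 0))" by (simp del: of_int_abs)
  ultimately have "1 \<le> house \<alpha> ^ degree p" by simp
  thus ?thesis using pow_lt1[OF h0, of "degree p"] dp by (cases "house \<alpha> < 1") auto
qed

definition Qp :: "nat \<Rightarrow> int poly" where "Qp d = [:-2:] + Polynomial.monom 1 d"

lemma Qp_deg: "d \<ge> 1 \<Longrightarrow> degree (Qp d) = d \<and> lead_coeff (Qp d) = 1"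
proof -
  assume d: "d \<ge> 1"
  have "degree [:-2::int:] < degree (Polynomial.monom (1::int) d)" using d by (simp add: degree_monom_eq)
  moreover have "poly.coeff [:-2::int:] d = 0" using d by (cases d) auto
  ultimately show ?thesis unfolding Qp_def
    by (simp add: degree_add_eq_right lead_coeff_add_le degree_monom_eq)
qed

lemma Qp_eval_int: "poly (map_poly of_int (Qp d)) (z::complex) = z ^ d - 2"
  unfolding Qp_def by (simp add: of_int_hom.map_poly_hom_add poly_monom)

lemma Qp_eval: "poly (map_poly of_rat (map_poly rat_of_int (Qp d))) (z::complex) = z ^ d - 2"
  by (simp add: map_poly_map_poly o_def Qp_eval_int)

lemma int_pow_contra:
  assumes "(m::int) ^ d = 2 ^ k" "m \<ge> 0" "1 \<le> k" "k < d"
  shows False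
proof -
  consider "m = 0" | "m = 1" | "m \<ge> 2" using assms(2) by linarith
  thus False
  proof cases
    case 1 thus False using assms by (cases d) auto
  next
    case 2 thus False using assms by simp
  next
    case 3
    have "(2::int) ^ d \<le> m ^ d" using 3 by (intro power_mono) auto
    moreover have "(2::int) ^ k < 2 ^ d" using assms(4) by (intro power_strict_increasing) auto
    ultimately show False using assms(1) by simp
  qed
qed

lemma irr_Qp:
  assumes d: "d \<ge> 1"
  shows "irreducible (map_poly rat_of_int (Qp d))" (is "irreducible ?P")
proof (rule irreducibleI)
  have QD: "degree (Qp d) = d" "lead_coeff (Qp d) = 1" using Qp_deg[OF d] by auto
  have dP: "degree ?P = d" using QD by simp
  show P0: "?P \<noteq> 0" using QD d by auto
  show "\<not> is_unit ?P" using dP d P0 by (simp add: is_unit_iff_degree)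
  fix a b assume Pab: "?P = a * b"
  show "is_unit a \<or> is_unit b"
  proof (rule ccontr)
    assume nu: "\<not> (is_unit a \<or> is_unit b)"
    have a0: "a \<noteq> 0" "b \<noteq> 0" using Pab P0 by auto
    have da: "degree a > 0" "degree b > 0" using nu a0 by (auto simp: is_unit_iff_degree)
    have dd: "degree a + degree b = d" using dP Pab a0 by (simp add: degree_mult_eq)
    define c where "c = lead_coeff a"
    have c0: "c \<noteq> 0" using a0 c_def by simp
    define g where "g = Polynomial.smult (inverse c) a"
    define h where "h = Polynomial.smult c b"
    have gh: "?P = g * h" using Pab c0 unfolding g_def h_def by (simp add: mult_smult_left mult_smult_right)
    have lg: "lead_coeff g = 1" "degree g = degree a" using c0 unfolding g_def c_def by auto
    from gauss_monic[OF QD(2) gh lg(1)] obtain g' where gg': "g = map_poly rat_of_int g'" by blast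
    let ?f = "map_poly (of_rat::rat\<Rightarrow>complex) g"
    have lf: "lead_coeff ?f = 1" "degree ?f = degree a" using lg by simp_all
    obtain as where as: "length as = degree ?f" "\<forall>a\<in>set as. poly ?f a = 0" "poly ?f 0 = (\<Prod>a\<leftarrow>as. - a)"
      using prod_roots[OF lf(1)] by blast
    have rt: "norm z ^ d = 2" if "poly ?f z = 0" for z
    proof -
      have "poly (map_poly of_rat ?P) z = 0" unfolding gh mp_rat_mult using that by simp
      hence "z ^ d = 2" unfolding Qp_eval by simp
      hence "norm (z ^ d) = 2" by simp
      thus ?thesis by (simp add: norm_power)
    qed
    have "norm (poly ?f 0) ^ d = 2 ^ degree a"
      using norm_prod_pow[of as d 2] as rt lf by auto
    moreover have "poly ?f 0 = of_int (poly.coeff g' 0)"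
      by (simp add: poly_0_coeff_0 gg')
    ultimately have "real_of_int \<bar>poly.coeff g' 0\<bar> ^ d = 2 ^ degree a" by simp
    hence "\<bar>poly.coeff g' 0\<bar> ^ d = 2 ^ degree a"
      by (metis of_int_eq_iff of_int_numeral of_int_power)
    from int_pow_contra[OF this] da dd show False by simp
  qed
qed

lemma witness:
  assumes d: "d \<ge> 1"
  shows "algebraic_integer (complex_of_real (root d 2)) \<and> alg_degree (complex_of_real (root d 2)) = d
    \<and> \<not> root_of_unity (complex_of_real (root d 2)) \<and> house (complex_of_real (root d 2)) = root d 2"
proof -
  let ?a = "complex_of_real (root d 2)"
  let ?P = "map_poly rat_of_int (Qp d)"
  have QD: "degree (Qp d) = d" "lead_coeff (Qp d) = 1" using Qp_deg[OF d] by auto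
  have r2: "root d 2 ^ d = 2" using d by (intro real_root_pow_pos2) auto
  have ad: "?a ^ d = 2" using arg_cong[OF r2, of complex_of_real] by (simp only: of_real_power) simp
  have ai: "algebraic_integer ?a" unfolding algebraic_integer_def
    using QD(2) Qp_eval_int[of d ?a] ad by auto
  have mp: "min_poly ?a = ?P"
  proof (rule min_poly_eq)
    show "lead_coeff ?P = 1" using QD by simp
    show "irreducible ?P" by (rule irr_Qp[OF d])
    show "poly (map_poly of_rat ?P) ?a = 0" by (simp add: Qp_eval ad)
  qed
  have deg: "alg_degree ?a = d" unfolding alg_degree_def mp using QD by simp
  have na: "norm ?a = root d 2" using d by simp
  have gt: "root d 2 > 1" using d by simp
  have nru: "\<not> root_of_unity ?a"
  proof
    assume "root_of_unity ?a"
    then obtain n :: nat where n: "n > 0" "?a ^ n = 1" unfolding root_of_unity_def by blast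
    hence "norm (?a ^ n) = 1" by simp
    hence "norm ?a ^ n = 1" by (simp only: norm_power)
    moreover have "norm ?a ^ n > 1" using na gt n(1) by (simp add: one_less_power)
    ultimately show False by simp
  qed
  have conj: "conjugates ?a = {z. z ^ d = 2}" unfolding conjugates_def mp Qp_eval by simp
  have "norm ` conjugates ?a = {root d 2}"
  proof
    show "norm ` conjugates ?a \<subseteq> {root d 2}"
    proof
      fix x assume "x \<in> norm ` conjugates ?a"
      then obtain z :: complex where z: "z ^ d = 2" "x = norm z" using conj by auto
      hence "norm (z ^ d) = 2" by simp
      hence "x ^ d = 2" using z(2) by (simp only: norm_power)
      hence "root d 2 = x" using z d by (intro real_root_pos_unique) auto
      thus "x \<in> {root d 2}" by simp
    qed
    have "?a \<in> conjugates ?a" using conj ad by simp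
    hence "norm ?a \<in> norm ` conjugates ?a" by (rule imageI)
    thus "{root d 2} \<subseteq> norm ` conjugates ?a" using na by simp
  qed
  hence "house ?a = root d 2" unfolding house_def by simp
  thus ?thesis using ai deg nru by blast
qed

lemma mhouse_bounds:
  assumes d: "d \<ge> 2"
  shows "1 \<le> mhouse d ^ d \<and> mhouse d ^ d \<le> 2"
proof -
  define S where "S = {house \<alpha> | \<alpha>. algebraic_integer \<alpha> \<and> alg_degree \<alpha> = d \<and> \<not> root_of_unity \<alpha>}"
  have m: "mhouse d = Inf S" unfolding mhouse_def S_def ..
  have w: "root d 2 \<in> S" using witness[of d] d unfolding S_def by force
  have lb: "\<forall>x\<in>S. 1 \<le> x" unfolding S_def using house_ge1 d by auto
  have bb: "bdd_below S" using lb by (intro bdd_belowI[of S 1]) auto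
  have u: "mhouse d \<le> root d 2" unfolding m by (rule cInf_lower[OF w bb])
  have l: "1 \<le> mhouse d" unfolding m using w lb by (intro cInf_greatest) auto
  have "mhouse d ^ d \<le> root d 2 ^ d" using u l by (intro power_mono) auto
  also have "root d 2 ^ d = 2" using d by (intro real_root_pow_pos2) auto
  finally show ?thesis using l by (simp add: one_le_power)
qed

theorem corollary2:
  shows "\<exists>L\<in>{1..2::real}. \<exists>r::nat \<Rightarrow> nat. strict_mono r \<and> r 0 \<ge> 1 \<and>
           (\<lambda>n. mhouse (r n) ^ (r n)) \<longlonglongrightarrow> L"
proof -
  define s where "s n = mhouse (n+2) ^ (n+2)" for n
  have sb: "1 \<le> s n \<and> s n \<le> 2" for n unfolding s_def by (rule mhouse_bounds) simp
  obtain f where f: "strict_mono f" "monoseq (\<lambda>n. s (f n))" using seq_monosub by blast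
  have "Bseq (\<lambda>n. s (f n))"
  proof (rule BseqI')
    fix n show "norm (s (f n)) \<le> 2" using sb[of "f n"] by simp
  qed
  hence "convergent (\<lambda>n. s (f n))" using Bseq_monoseq_convergent f(2) by blast
  then obtain L where L: "(\<lambda>n. s (f n)) \<longlonglongrightarrow> L" by (auto simp: convergent_def)
  have L1: "1 \<le> L" by (rule LIMSEQ_le_const[OF L]) (use sb in auto)
  have L2: "L \<le> 2" by (rule LIMSEQ_le_const2[OF L]) (use sb in auto)
  define r where "r n = f n + 2" for n
  have "strict_mono r" using f(1) unfolding r_def strict_mono_def by simp
  moreover have "r 0 \<ge> 1" unfolding r_def by simp
  moreover have "(\<lambda>n. mhouse (r n) ^ (r n)) = (\<lambda>n. s (f n))" unfolding r_def s_def by simp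
  ultimately have "strict_mono r \<and> r 0 \<ge> 1 \<and> (\<lambda>n. mhouse (r n) ^ (r n)) \<longlonglongrightarrow> L"
    using L by simp
  thus ?thesis using L1 L2 by auto
qed

end
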